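(* The Levi graph $LG_2$ has no proper distinguishing monochromatic $3$-coloring.
   Context: Let $V=\mathbb{F}_2^3$; $LG_2$ is the bipartite graph whose vertices are the $1$-dimensional subspaces ("points") and the $2$-dimensional subspaces ("lines") of $V$, a point being adjacent to a line iff it is contained in it. A coloring of $LG_2$ is monochromatic if all points receive the same color or all lines receive the same color. A coloring is distinguishing if the only graph automorphism mapping every color class onto itself is the identity. *)

theory Defs
  imports Main
begin

text \<open>The vector space V = F_2^3, with F_2 represented by bool (True = 1),
  addition = componentwise exclusive or.\<close>

type_synonym vec3 = "bool \<times> bool \<times> bool"

definition vzero :: vec3 where
  "vzero = (False, False, False)"

definition vadd :: "vec3 \<Rightarrow> vec3 \<Rightarrow> vec3" where
  "vadd u v = (case u of (a1, a2, a3) \<Rightarrow> case v of (b1, b2, b3) \<Rightarrow>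
      (a1 \<noteq> b1, a2 \<noteq> b2, a3 \<noteq> b3))"

text \<open>Over F_2 a subset is a linear subspace iff it contains 0 and is closed
  under addition (scalar multiplication by 0 or 1 is automatic).
  A subspace of dimension k has exactly 2^k elements.\<close>

definition subspace2 :: "vec3 set \<Rightarrow> bool" where
  "subspace2 W \<longleftrightarrow> vzero \<in> W \<and> (\<forall>u\<in>W. \<forall>v\<in>W. vadd u v \<in> W)"

definition subspace_dim :: "vec3 set \<Rightarrow> nat \<Rightarrow> bool" where
  "subspace_dim W k \<longleftrightarrow> subspace2 W \<and> card W = 2 ^ k"

definition LG2_points :: "vec3 set set" where
  "LG2_points = {W. subspace_dim W 1}"

definition LG2_lines :: "vec3 set set" where
  "LG2_lines = {W. subspace_dim W 2}"

definition LG2_verts :: "vec3 set set" where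
  "LG2_verts = LG2_points \<union> LG2_lines"

definition LG2_adj :: "vec3 set \<Rightarrow> vec3 set \<Rightarrow> bool" where
  "LG2_adj x y \<longleftrightarrow>
     (x \<in> LG2_points \<and> y \<in> LG2_lines \<and> x \<subseteq> y) \<or>
     (y \<in> LG2_points \<and> x \<in> LG2_lines \<and> y \<subseteq> x)"

definition LG2_automorphism :: "(vec3 set \<Rightarrow> vec3 set) \<Rightarrow> bool" where
  "LG2_automorphism \<sigma> \<longleftrightarrow> bij_betw \<sigma> LG2_verts LG2_verts \<and>
     (\<forall>x\<in>LG2_verts. \<forall>y\<in>LG2_verts. LG2_adj (\<sigma> x) (\<sigma> y) \<longleftrightarrow> LG2_adj x y)"

definition three_coloring :: "(vec3 set \<Rightarrow> nat) \<Rightarrow> bool" where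
  "three_coloring c \<longleftrightarrow> (\<forall>x\<in>LG2_verts. c x < 3)"

definition proper_coloring :: "(vec3 set \<Rightarrow> nat) \<Rightarrow> bool" where
  "proper_coloring c \<longleftrightarrow> (\<forall>x\<in>LG2_verts. \<forall>y\<in>LG2_verts. LG2_adj x y \<longrightarrow> c x \<noteq> c y)"

definition monochromatic_coloring :: "(vec3 set \<Rightarrow> nat) \<Rightarrow> bool" where
  "monochromatic_coloring c \<longleftrightarrow>
     (\<forall>x\<in>LG2_points. \<forall>y\<in>LG2_points. c x = c y) \<or>
     (\<forall>x\<in>LG2_lines. \<forall>y\<in>LG2_lines. c x = c y)"

text \<open>An automorphism maps every color class onto itself iff it preserves
  the color of every vertex.\<close>
definition distinguishing_coloring :: "(vec3 set \<Rightarrow> nat) \<Rightarrow> bool" where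
  "distinguishing_coloring c \<longleftrightarrow>
     (\<forall>\<sigma>. LG2_automorphism \<sigma> \<and> (\<forall>x\<in>LG2_verts. c (\<sigma> x) = c x)
        \<longrightarrow> (\<forall>x\<in>LG2_verts. \<sigma> x = x))"

end

theory Submission
  imports Defs
begin

lemma allB: "(\<forall>x::bool. P x) = (P True \<and> P False)" by (metis (full_types))
lemma exB: "(\<exists>x::bool. P x) = (P True \<or> P False)" by (metis (full_types))
lemma allV: "(\<forall>x::vec3. P x) = (\<forall>a b c. P (a,b,c))" by auto
lemma exV: "(\<exists>x::vec3. P x) = (\<exists>a b c. P (a,b,c))" by auto

definition dot :: "vec3 \<Rightarrow> vec3 \<Rightarrow> bool" where
  "dot f x = (case f of (f1,f2,f3) \<Rightarrow> case x of (x1,x2,x3) \<Rightarrow>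
      ((f1 \<and> x1) \<noteq> ((f2 \<and> x2) \<noteq> (f3 \<and> x3))))"

definition tv :: "vec3 \<Rightarrow> vec3 \<Rightarrow> vec3 \<Rightarrow> vec3" where
  "tv w p x = (if dot p x then vadd x w else x)"



lemma combP: fixes g :: "vec3 \<Rightarrow> bool" shows "\<exists>w p. w \<noteq> vzero \<and> p \<noteq> vzero \<and> \<not> dot p w \<and>
   (\<forall>v. v \<noteq> vzero \<longrightarrow> g (tv w p v) = g v)"
  unfolding allV exV allB exB
  apply (simp add: tv_def dot_def vadd_def vzero_def)
  apply (cases "g (True,True,True)"; cases "g (True,True,False)"; cases "g (True,False,True)";
    cases "g (True,False,False)"; cases "g (False,True,True)"; cases "g (False,True,False)";
    cases "g (False,False,True)"; simp)
  done

lemma dot_zero[simp]: "dot f vzero = False" "dot vzero f = False"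
  by (auto simp: dot_def vzero_def split: prod.splits)
lemma dot_sym: "dot f x = dot x f"
  by (auto simp: dot_def split: prod.splits)
lemma dot_add: "dot f (vadd x y) = (dot f x \<noteq> dot f y)"
  by (cases f; cases x; cases y; auto simp: dot_def vadd_def)
lemma vadd_assoc: "vadd (vadd x y) z = vadd x (vadd y z)"
  by (cases x; cases y; cases z; auto simp: vadd_def)
lemma vadd_comm: "vadd x y = vadd y x"
  by (cases x; cases y; auto simp: vadd_def)
lemma vadd_lcomm: "vadd x (vadd y z) = vadd y (vadd x z)"
  by (cases x; cases y; cases z; auto simp: vadd_def)
lemma vadd_cancel[simp]: "vadd x (vadd x z) = z"
  by (cases x; cases z; auto simp: vadd_def)
lemma vadd_self[simp]: "vadd x x = vzero"
  by (cases x; auto simp: vadd_def vzero_def)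
lemma vadd_zero[simp]: "vadd x vzero = x" "vadd vzero x = x"
  by (cases x; auto simp: vadd_def vzero_def)+
lemma vadd_eq_self[simp]: "(vadd x y = x) = (y = vzero)" "(vadd y x = x) = (y = vzero)"
  by (cases x; cases y; auto simp: vadd_def vzero_def)+
lemma vadd_eq_zero[simp]: "(vadd x y = vzero) = (x = y)"
  by (cases x; cases y; auto simp: vadd_def vzero_def)

definition Lf :: "vec3 \<Rightarrow> vec3 set" where "Lf f = {x. \<not> dot f x}"

definition enumL :: "vec3 list" where
  "enumL = [(False,False,False),(False,False,True),(False,True,False),(False,True,True),
            (True,False,False),(True,False,True),(True,True,False),(True,True,True)]"

lemma enum_all: "x \<in> set enumL"
  by (cases x; rename_tac a b; case_tac a; case_tac b; rename_tac c d; case_tac c; case_tac d; simp add: enumL_def)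

lemma enumV: "{x::vec3. P x} = set (filter P enumL)"
  using enum_all by auto

lemma card_Lf: "f \<noteq> vzero \<Longrightarrow> card (Lf f) = 4"
  unfolding Lf_def enumV
  by (cases f; rename_tac a b; case_tac a; case_tac b; rename_tac c d; case_tac c; case_tac d; simp add: enumL_def dot_def vzero_def)

lemma subspace_Lf: "subspace2 (Lf f)"
  by (auto simp: subspace2_def Lf_def dot_add)

lemma sub_pair: "subspace2 {vzero, v}"
  unfolding subspace2_def by simp

lemma pt_char: "W \<in> LG2_points \<longleftrightarrow> (\<exists>v. v \<noteq> vzero \<and> W = {vzero, v})"
proof
  assume "W \<in> LG2_points"
  then have s: "vzero \<in> W" "card W = 2" by (auto simp: LG2_points_def subspace_dim_def subspace2_def)
  then obtain x y where xy: "x \<noteq> y" "W = {x,y}" unfolding card_2_iff by blast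
  show "\<exists>v. v \<noteq> vzero \<and> W = {vzero, v}"
  proof (cases "x = vzero")
    case True then show ?thesis using xy by metis
  next
    case False
    then have "y = vzero" using s(1) xy by blast
    then show ?thesis using xy False by (metis insert_commute)
  qed
next
  assume "\<exists>v. v \<noteq> vzero \<and> W = {vzero, v}"
  then obtain v where v: "v \<noteq> vzero" "W = {vzero, v}" by blast
  have "card {vzero, v} = 2" using v(1) by simp
  then show "W \<in> LG2_points"
    using sub_pair v(2) unfolding LG2_points_def subspace_dim_def by simp
qed

definition cross :: "vec3 \<Rightarrow> vec3 \<Rightarrow> vec3" where
  "cross a b = (case a of (a1,a2,a3) \<Rightarrow> case b of (b1,b2,b3) \<Rightarrow>
     ((a2 \<and> b3) \<noteq> (a3 \<and> b2), (a3 \<and> b1) \<noteq> (a1 \<and> b3), (a1 \<and> b2) \<noteq> (a2 \<and> b1)))"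

lemma span_Lf: "a \<noteq> vzero \<Longrightarrow> b \<noteq> vzero \<Longrightarrow> a \<noteq> b \<Longrightarrow>
   cross a b \<noteq> vzero \<and> {vzero, a, b, vadd a b} = Lf (cross a b)"
  apply (cases a; cases b; simp only: set_eq_iff allV allB Lf_def mem_Collect_eq)
  apply (simp add: cross_def dot_def vadd_def vzero_def split: prod.splits)
  apply (rename_tac a1 a2 a3 b1 b2 b3; case_tac a1; case_tac a2; case_tac a3; case_tac b1; case_tac b2; case_tac b3; simp)
  done

lemma tv_zero[simp]: "tv w p vzero = vzero" by (simp add: tv_def)

lemma tv_lin: "tv w p (vadd x y) = vadd (tv w p x) (tv w p y)"
  by (simp add: tv_def dot_add vadd_assoc vadd_comm vadd_lcomm)

lemma tv_inv: "\<not> dot p w \<Longrightarrow> tv w p (tv w p x) = x"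
  by (auto simp: tv_def dot_add vadd_assoc)

lemma inv_image_eq: "(\<And>x. T (T x) = x) \<Longrightarrow> T ` A = {y. T y \<in> A}"
  by (auto; metis image_eqI)

lemma dot_add_left: "dot (vadd x y) f = (dot x f \<noteq> dot y f)"
  using dot_add dot_sym by metis

lemma tv_dot: "dot f (tv w p y) = dot (tv p w f) y"
proof -
  have "dot f w = dot w f" by (rule dot_sym)
  then show ?thesis
    by (cases "dot p y"; cases "dot w f") (simp_all add: tv_def dot_add dot_add_left)
qed

lemma tv_Lf: "\<not> dot p w \<Longrightarrow> tv w p ` Lf f = Lf (tv p w f)"
  apply (subst inv_image_eq[of "tv w p"])
   apply (simp add: tv_inv)
  apply (simp add: Lf_def tv_dot)
  done

lemma tv_Pt: "tv w p ` {vzero, v} = {vzero, tv w p v}" by simp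

lemma inv_inj: "(\<And>x. T (T x) = x) \<Longrightarrow> inj T" by (metis injI)

lemma line_char: "W \<in> LG2_lines \<longleftrightarrow> (\<exists>f. f \<noteq> vzero \<and> W = Lf f)"
proof
  assume "W \<in> LG2_lines"
  then have s: "vzero \<in> W" "card W = 4" "\<And>u v. u \<in> W \<Longrightarrow> v \<in> W \<Longrightarrow> vadd u v \<in> W"
    by (auto simp: LG2_lines_def subspace_dim_def subspace2_def)
  have fin: "finite W" using s(2) card.infinite by fastforce
  have "card (W - {vzero}) = 3" using s fin by simp
  then have "W - {vzero} \<noteq> {}" by (metis card.empty zero_neq_numeral)
  then obtain a where a: "a \<in> W" "a \<noteq> vzero" by blast
  have "card (W - {vzero, a}) = 2" using s fin a by (simp add: card_Diff_subset_Int)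
  then have "W - {vzero, a} \<noteq> {}" by (metis card.empty zero_neq_numeral)
  then obtain b where b: "b \<in> W" "b \<noteq> vzero" "b \<noteq> a" by blast
  have ab: "vadd a b \<in> W" using s a b by auto
  have span: "cross a b \<noteq> vzero \<and> {vzero, a, b, vadd a b} = Lf (cross a b)"
    using span_Lf a b by auto
  have "{vzero, a, b, vadd a b} \<subseteq> W" using a b ab s(1) by blast
  then have sub: "Lf (cross a b) \<subseteq> W" using span by simp
  have "Lf (cross a b) = W"
    using card_subset_eq[OF fin sub] card_Lf span s by auto
  then show "\<exists>f. f \<noteq> vzero \<and> W = Lf f" using span by metis
next
  assume "\<exists>f. f \<noteq> vzero \<and> W = Lf f"
  then show "W \<in> LG2_lines" using card_Lf subspace_Lf
    by (auto simp: LG2_lines_def subspace_dim_def)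
qed

locale invlin =
  fixes T :: "vec3 \<Rightarrow> vec3"
  assumes inv: "\<And>x. T (T x) = x" and lin: "\<And>x y. T (vadd x y) = vadd (T x) (T y)"
    and z: "T vzero = vzero"
begin

lemma injT: "inj T" using inv by (metis injI)

lemma sub_img: "subspace2 W \<Longrightarrow> subspace2 (T ` W)"
proof -
  assume w: "subspace2 W"
  have "vzero \<in> T ` W" using w z unfolding subspace2_def by (metis image_eqI)
  moreover have "\<forall>u\<in>T ` W. \<forall>v\<in>T ` W. vadd u v \<in> T ` W"
  proof (intro ballI)
    fix u v assume "u \<in> T ` W" "v \<in> T ` W"
    then obtain x y where "x \<in> W" "y \<in> W" "u = T x" "v = T y" by blast
    then show "vadd u v \<in> T ` W" using w lin unfolding subspace2_def by (metis image_eqI)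
  qed
  ultimately show ?thesis unfolding subspace2_def by blast
qed

lemma dim_img: "subspace_dim W k \<Longrightarrow> subspace_dim (T ` W) k"
  unfolding subspace_dim_def using sub_img injT by (simp add: card_image inj_on_subset)

lemma TT: "T ` (T ` W) = W" using inv by (simp add: image_image)

lemma pts: "W \<in> LG2_points \<longleftrightarrow> T ` W \<in> LG2_points"
proof
  show "W \<in> LG2_points \<Longrightarrow> T ` W \<in> LG2_points" using dim_img by (simp add: LG2_points_def)
  assume "T ` W \<in> LG2_points"
  then have "T ` (T ` W) \<in> LG2_points" using dim_img by (simp add: LG2_points_def)
  then show "W \<in> LG2_points" by (simp only: TT)
qed

lemma lns: "W \<in> LG2_lines \<longleftrightarrow> T ` W \<in> LG2_lines"
proof
  show "W \<in> LG2_lines \<Longrightarrow> T ` W \<in> LG2_lines" using dim_img by (simp add: LG2_lines_def)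
  assume "T ` W \<in> LG2_lines"
  then have "T ` (T ` W) \<in> LG2_lines" using dim_img by (simp add: LG2_lines_def)
  then show "W \<in> LG2_lines" by (simp only: TT)
qed

lemma aut: "LG2_automorphism (\<lambda>W. T ` W)"
proof -
  have vs: "W \<in> LG2_verts \<Longrightarrow> T ` W \<in> LG2_verts" for W using pts lns by (auto simp: LG2_verts_def)
  have sub: "T ` x \<subseteq> T ` y \<longleftrightarrow> x \<subseteq> y" for x y using injT by (simp add: inj_image_subset_iff)
  have adj: "LG2_adj (T ` x) (T ` y) \<longleftrightarrow> LG2_adj x y" for x y
    unfolding LG2_adj_def by (simp only: pts[symmetric] lns[symmetric] sub)
  have bij: "bij_betw (\<lambda>W. T ` W) LG2_verts LG2_verts"
    by (rule bij_betw_byWitness[where f'="\<lambda>W. T ` W"]) (auto simp: TT vs)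
  show ?thesis unfolding LG2_automorphism_def using bij adj by blast
qed
end

lemma tv_invlin: "\<not> dot p w \<Longrightarrow> invlin (tv w p)"
  by (unfold_locales) (auto simp: tv_inv tv_lin)


lemma pt_on_line: "\<exists>v. v \<noteq> vzero \<and> \<not> dot f v"
  by (cases f) (simp add: exV exB dot_def vzero_def)
lemma line_thru_pt: "\<exists>f. f \<noteq> vzero \<and> \<not> dot f v"
  by (cases v) (simp add: exV exB dot_def vzero_def)
lemma ex_dot: "w \<noteq> vzero \<Longrightarrow> \<exists>v. dot w v"
  by (cases w; rename_tac a b; case_tac a; case_tac b; rename_tac c d; case_tac c; case_tac d; simp add: exV exB dot_def vzero_def)

lemma moved: "dot q v \<Longrightarrow> r \<noteq> vzero \<Longrightarrow> tv r q ` {vzero, v} \<noteq> {vzero, v}"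
proof
  assume h: "dot q v" "r \<noteq> vzero" "tv r q ` {vzero, v} = {vzero, v}"
  have "v \<noteq> vzero" using h(1) by auto
  moreover have "tv r q v = vadd v r" using h(1) by (simp add: tv_def)
  ultimately have "{vzero, vadd v r} = {vzero, v}" using h(3) by simp
  then have "v \<in> {vzero, vadd v r}" by simp
  then show False using h(2) \<open>v \<noteq> vzero\<close>
    by (auto; metis vadd_eq_self(1))
qed

lemma vert_cases: "x \<in> LG2_verts \<Longrightarrow>
   (\<exists>v. v \<noteq> vzero \<and> x = {vzero, v}) \<or> (\<exists>f. f \<noteq> vzero \<and> x = Lf f)"
  unfolding LG2_verts_def using pt_char line_char by blast

lemma Pt_in: "v \<noteq> vzero \<Longrightarrow> {vzero, v} \<in> LG2_verts" "v \<noteq> vzero \<Longrightarrow> {vzero, v} \<in> LG2_points"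
  unfolding LG2_verts_def using pt_char by blast+
lemma Lf_in: "f \<noteq> vzero \<Longrightarrow> Lf f \<in> LG2_verts" "f \<noteq> vzero \<Longrightarrow> Lf f \<in> LG2_lines"
  unfolding LG2_verts_def using line_char by blast+

lemma adjPL: "v \<noteq> vzero \<Longrightarrow> f \<noteq> vzero \<Longrightarrow> \<not> dot f v \<Longrightarrow> LG2_adj {vzero, v} (Lf f)"
  using Pt_in Lf_in by (auto simp: LG2_adj_def Lf_def)

lemma tv_nz: "\<not> dot p w \<Longrightarrow> x \<noteq> vzero \<Longrightarrow> tv w p x \<noteq> vzero"
  by (metis tv_inv tv_zero)

lemma three: "a < 3 \<Longrightarrow> (x::nat) < 3 \<Longrightarrow> y < 3 \<Longrightarrow> x \<noteq> a \<Longrightarrow> y \<noteq> a \<Longrightarrow> (x = (if a = 0 then 1 else 0)) = (y = (if a = 0 then 1 else 0)) \<Longrightarrow> x = y"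
  by (auto split: if_splits)

theorem mainTheorem14:
  shows "\<not> (\<exists>c. three_coloring c \<and> proper_coloring c \<and>
              distinguishing_coloring c \<and> monochromatic_coloring c)"
proof
  assume "\<exists>c. three_coloring c \<and> proper_coloring c \<and>
              distinguishing_coloring c \<and> monochromatic_coloring c"
  then obtain c where c3: "three_coloring c" and pr: "proper_coloring c"
    and di: "distinguishing_coloring c" and mo: "monochromatic_coloring c" by blast
  have lt: "x \<in> LG2_verts \<Longrightarrow> c x < 3" for x using c3 by (simp add: three_coloring_def)
  have prp: "c {vzero, v} \<noteq> c (Lf f)" if "v \<noteq> vzero" "f \<noteq> vzero" "\<not> dot f v" for v f
  proof -
    have "LG2_adj {vzero, v} (Lf f)" using adjPL that by blast
    moreover have "{vzero, v} \<in> LG2_verts" "Lf f \<in> LG2_verts" using Pt_in Lf_in that by blast+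
    ultimately show ?thesis using pr unfolding proper_coloring_def by blast
  qed
  have key: "False" if T: "T = tv w p" "\<not> dot p w" "dot p v" "w \<noteq> vzero"
     and pres: "\<And>x. x \<in> LG2_verts \<Longrightarrow> c (T ` x) = c x" for T w p v
  proof -
    have il: "invlin T" unfolding T(1) by (rule tv_invlin[OF T(2)])
    have au: "LG2_automorphism (\<lambda>W. T ` W)" by (rule invlin.aut[OF il])
    have A: "LG2_automorphism (\<lambda>W. T ` W) \<and> (\<forall>x\<in>LG2_verts. c (T ` x) = c x)"
      using au pres by simp
    have I: "LG2_automorphism (\<lambda>W. T ` W) \<and> (\<forall>x\<in>LG2_verts. c (T ` x) = c x) \<longrightarrow> (\<forall>x\<in>LG2_verts. T ` x = x)"
      using di unfolding distinguishing_coloring_def by (rule spec)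
    have fx: "\<forall>x\<in>LG2_verts. T ` x = x" using I A by (rule mp)
    have v0: "v \<noteq> vzero"
    proof
      assume "v = vzero" then show False using T(3) by simp
    qed
    have "T ` {vzero, v} = {vzero, v}" using fx Pt_in(1)[OF v0] by (rule bspec)
    then have h: "tv w p ` {vzero, v} = {vzero, v}" unfolding T(1) .
    show False using moved[OF T(3) T(4)] h by (rule notE)
  qed
  have t: "(True,True,True) \<noteq> vzero" by (simp add: vzero_def)
  from mo show False unfolding monochromatic_coloring_def
  proof
    assume m: "\<forall>x\<in>LG2_points. \<forall>y\<in>LG2_points. c x = c y"
    define a where "a = c {vzero, (True,True,True)}"
    have a3: "a < 3" unfolding a_def using lt Pt_in(1)[OF t] by blast
    have pa: "c {vzero, v} = a" if "v \<noteq> vzero" for v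
      using m Pt_in(2)[OF that] Pt_in(2)[OF t] unfolding a_def by blast
    have la: "c (Lf f) \<noteq> a" if "f \<noteq> vzero" for f
    proof -
      obtain v where "v \<noteq> vzero" "\<not> dot f v" using pt_on_line[of f] by blast
      then show ?thesis using prp[of v f] pa[of v] that by simp
    qed
    define g where "g f = (c (Lf f) = (if a = 0 then 1 else 0))" for f
    obtain w p where wp: "w \<noteq> vzero" "p \<noteq> vzero" "\<not> dot p w"
      and gg: "\<forall>v. v \<noteq> vzero \<longrightarrow> g (tv w p v) = g v" using combP[of g] by blast
    have wp': "\<not> dot w p" using wp(3) dot_sym by metis
    obtain v where v: "dot w v" using ex_dot[OF wp(1)] by blast
    show False
    proof (rule key[where T="tv p w"])
      show "tv p w = tv p w" "\<not> dot w p" "dot w v" "p \<noteq> vzero" using wp' v wp by auto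
      fix x assume x: "x \<in> LG2_verts"
      from vert_cases[OF x] show "c (tv p w ` x) = c x"
      proof
        assume "\<exists>u. u \<noteq> vzero \<and> x = {vzero, u}"
        then obtain u where u: "u \<noteq> vzero" "x = {vzero, u}" by blast
        have "tv p w u \<noteq> vzero" using tv_nz[OF wp' u(1)] .
        then show ?thesis using pa u by simp
      next
        assume "\<exists>f. f \<noteq> vzero \<and> x = Lf f"
        then obtain f where f: "f \<noteq> vzero" "x = Lf f" by blast
        have e: "tv p w ` x = Lf (tv w p f)" using tv_Lf[OF wp'] f by simp
        have nz: "tv w p f \<noteq> vzero" using tv_nz[OF wp(3) f(1)] .
        have 1: "c (Lf (tv w p f)) < 3" using lt Lf_in(1)[OF nz] by blast
        have 2: "c (Lf f) < 3" using lt Lf_in(1)[OF f(1)] by blast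
        have 3: "g (tv w p f) = g f" using gg f(1) by blast
        show ?thesis unfolding e unfolding f(2)
          by (rule three[OF a3 1 2 la[OF nz] la[OF f(1)]]) (use 3 in \<open>simp add: g_def\<close>)
      qed
    qed
  next
    assume m: "\<forall>x\<in>LG2_lines. \<forall>y\<in>LG2_lines. c x = c y"
    define a where "a = c (Lf (True,True,True))"
    have a3: "a < 3" unfolding a_def using lt Lf_in(1)[OF t] by blast
    have la: "c (Lf f) = a" if "f \<noteq> vzero" for f
      using m Lf_in(2)[OF that] Lf_in(2)[OF t] unfolding a_def by blast
    have pa: "c {vzero, v} \<noteq> a" if "v \<noteq> vzero" for v
    proof -
      obtain f where "f \<noteq> vzero" "\<not> dot f v" using line_thru_pt[of v] by blast
      then show ?thesis using prp[of v f] la[of f] that by simp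
    qed
    define g where "g v = (c {vzero, v} = (if a = 0 then 1 else 0))" for v
    obtain w p where wp: "w \<noteq> vzero" "p \<noteq> vzero" "\<not> dot p w"
      and gg: "\<forall>v. v \<noteq> vzero \<longrightarrow> g (tv w p v) = g v" using combP[of g] by blast
    have wp': "\<not> dot w p" using wp(3) dot_sym by metis
    obtain v where v: "dot p v" using ex_dot[OF wp(2)] by blast
    show False
    proof (rule key[where T="tv w p"])
      show "tv w p = tv w p" "\<not> dot p w" "dot p v" "w \<noteq> vzero" using wp v by auto
      fix x assume x: "x \<in> LG2_verts"
      from vert_cases[OF x] show "c (tv w p ` x) = c x"
      proof
        assume "\<exists>u. u \<noteq> vzero \<and> x = {vzero, u}"
        then obtain u where u: "u \<noteq> vzero" "x = {vzero, u}" by blast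
        have nz: "tv w p u \<noteq> vzero" using tv_nz[OF wp(3) u(1)] .
        have 1: "c {vzero, tv w p u} < 3" using lt Pt_in(1)[OF nz] by blast
        have 2: "c {vzero, u} < 3" using lt Pt_in(1)[OF u(1)] by blast
        have 3: "g (tv w p u) = g u" using gg u(1) by blast
        show ?thesis unfolding u(2) tv_Pt
          by (rule three[OF a3 1 2 pa[OF nz] pa[OF u(1)]]) (use 3 in \<open>simp add: g_def\<close>)
      next
        assume "\<exists>f. f \<noteq> vzero \<and> x = Lf f"
        then obtain f where f: "f \<noteq> vzero" "x = Lf f" by blast
        have e: "tv w p ` x = Lf (tv p w f)" using tv_Lf[OF wp(3)] f by simp
        have "tv p w f \<noteq> vzero" using tv_nz[OF wp' f(1)] .
        then show ?thesis unfolding e unfolding f(2) using la f(1) by simp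
      qed
    qed
  qed
qed

end
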